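(* Let $A = \begin{pmatrix} 2 & 1 \\ 1 & 1\end{pmatrix}$, $\lambda = \frac{3+\sqrt5}{2}$, and let $M_A$ be the suspension of $A$ with the Riemannian metric $ds^2 = dz^2 + e^{2z\log\lambda}du^2 + e^{-2z\log\lambda}dv^2$ (see context). Then the restrictions of the geodesic flow on $SM_A$ to the invariant submanifolds $V^+ = \{p_u=p_v=0,\ p_z=1\}$ and $V^- = \{p_u=p_v=0,\ p_z=-1\}$ are Anosov flows.
   Context: $T^2 = \mathbb{R}^2/\mathbb{Z}^2$ with $A$ acting linearly; $M_A$ is the quotient of $T^2 \times \mathbb{R}$ by the $\mathbb{Z}$-action generated by $(X,z)\mapsto (AX,z+1)$. $(u,v)$ are linear coordinates on $\mathbb{R}^2$ in which $A(u,v) = (\lambda^{-1}u,\lambda v)$; the metric above is invariant under the $\mathbb{Z}$-action and descends to $M_A$. $(p_u,p_v,p_z)$ are the momenta conjugate to $(u,v,z)$, and the geodesic flow is the Hamiltonian flow of $H = \frac12(p_z^2 + e^{-2z\log\lambda}p_u^2 + e^{2z\log\lambda}p_v^2)$ on $SM_A = \{H = 1/2\}$. *)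

theory Defs
  imports "HOL-Analysis.Analysis"
begin

text \<open>lambda = (3 + sqrt 5)/2, the expanding eigenvalue of A.\<close>
definition lam :: real where "lam = (3 + sqrt 5) / 2"

definition A_mat :: "real^2^2" where
  "A_mat = vector [vector [2, 1], vector [1, 1]]"

definition eigen_coords :: "(real^2 \<Rightarrow> real^2) \<Rightarrow> bool" where
  "eigen_coords P \<longleftrightarrow> linear P \<and> bij P \<and>
     (\<forall>X. P (A_mat *v X) = vector [(P X)$1 / lam, lam * (P X)$2])"

text \<open>Points of the universal cover T*R^3: (q,p) with q = (u,v,z), p = (p_u,p_v,p_z).\<close>
definition ham :: "(real^3) \<times> (real^3) \<Rightarrow> real" where
  "ham = (\<lambda>(q, p). ((p$3)^2 + exp (-2 * q$3 * ln lam) * (p$1)^2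
                              + exp (2 * q$3 * ln lam) * (p$2)^2) / 2)"

definition hamiltonian_flow ::
  "((real^3) \<times> (real^3) \<Rightarrow> real) \<Rightarrow> (real \<Rightarrow> (real^3) \<times> (real^3) \<Rightarrow> (real^3) \<times> (real^3)) \<Rightarrow> bool" where
  "hamiltonian_flow H \<Phi> \<longleftrightarrow> (\<forall>x. \<Phi> 0 x = x) \<and>
     (\<forall>x t. \<exists>a b. (H has_derivative (\<lambda>hk. a \<bullet> fst hk + b \<bullet> snd hk)) (at (\<Phi> t x)) \<and>
                 ((\<lambda>s. \<Phi> s x) has_vector_derivative (b, - a)) (at t))"

definition metric_norm :: "real^3 \<Rightarrow> real^3 \<Rightarrow> real" where
  "metric_norm q w = sqrt ((w$3)^2 + exp (2 * q$3 * ln lam) * (w$1)^2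
                                   + exp (-2 * q$3 * ln lam) * (w$2)^2)"

text \<open>Generators of the deck group of R^3 -> M_A in coordinates (u,v,z):
  lattice translations (P n, 0), n in Z^2, and (u,v,z) |-> (u/lambda, lambda v, z+1).\<close>
definition deck_generators :: "(real^2 \<Rightarrow> real^2) \<Rightarrow> (real^3 \<Rightarrow> real^3) set" where
  "deck_generators P =
     {(\<lambda>q. q + vector [(P (vector [of_int a, of_int b]))$1,
                       (P (vector [of_int a, of_int b]))$2, 0]) | a b :: int. True}
     \<union> {(\<lambda>q. vector [q$1 / lam, lam * q$2, q$3 + 1])}"

text \<open>Anosov property of a flow on a compact quotient M = X/Gamma, stated on the cover X
  (a Euclidean space), with a Gamma-invariant Riemannian norm N and a Gamma-equivariant
  continuous invariant splitting E^s + E^u + R.(generator), with uniform constants.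
  G is a generating set of the deck group Gamma.\<close>
definition anosov_cover ::
  "('a::euclidean_space \<Rightarrow> 'a) set \<Rightarrow> ('a \<Rightarrow> 'a \<Rightarrow> real) \<Rightarrow> (real \<Rightarrow> 'a \<Rightarrow> 'a) \<Rightarrow> bool" where
  "anosov_cover G N \<phi> \<longleftrightarrow>
     (\<forall>t x. \<phi> t differentiable (at x)) \<and>
     (\<exists>X Es Eu Ps Pu C \<mu>. C > 0 \<and> \<mu> > 0 \<and>
        (\<forall>x. ((\<lambda>t. \<phi> t x) has_vector_derivative X x) (at 0) \<and> X x \<noteq> 0) \<and>
        (\<forall>x. subspace (Es x) \<and> subspace (Eu x)) \<and>
        (\<forall>x a b c. a \<in> Es x \<longrightarrow> b \<in> Eu x \<longrightarrow> a + b + c *\<^sub>R X x = 0 \<longrightarrow>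
                   a = 0 \<and> b = 0 \<and> c = 0) \<and>
        (\<forall>x w. Ps x w \<in> Es x \<and> Pu x w \<in> Eu x \<and> w - Ps x w - Pu x w \<in> span {X x}) \<and>
        continuous_on UNIV (\<lambda>(x, w). Ps x w) \<and>
        continuous_on UNIV (\<lambda>(x, w). Pu x w) \<and>
        (\<forall>t x v. v \<in> Es x \<longrightarrow> frechet_derivative (\<phi> t) (at x) v \<in> Es (\<phi> t x)) \<and>
        (\<forall>t x v. v \<in> Eu x \<longrightarrow> frechet_derivative (\<phi> t) (at x) v \<in> Eu (\<phi> t x)) \<and>
        (\<forall>t x v. t \<ge> 0 \<longrightarrow> v \<in> Es x \<longrightarrow>
           N (\<phi> t x) (frechet_derivative (\<phi> t) (at x) v) \<le> C * exp (- \<mu> * t) * N x v) \<and>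
        (\<forall>t x v. t \<ge> 0 \<longrightarrow> v \<in> Eu x \<longrightarrow>
           N (\<phi> (- t) x) (frechet_derivative (\<phi> (- t)) (at x) v) \<le> C * exp (- \<mu> * t) * N x v) \<and>
        (\<forall>\<gamma>\<in>G. \<forall>x v. \<gamma> differentiable (at x) \<and>
           (v \<in> Es x \<longrightarrow> frechet_derivative \<gamma> (at x) v \<in> Es (\<gamma> x)) \<and>
           (v \<in> Eu x \<longrightarrow> frechet_derivative \<gamma> (at x) v \<in> Eu (\<gamma> x))))"

end

theory Submission imports Defs begin

lemma dir_deriv:
  fixes H :: "'a::real_normed_vector \<Rightarrow> real"
  assumes "(H has_derivative D) (at z)" "((\<lambda>s. H (z + s *\<^sub>R w)) has_real_derivative c) (at 0)"
  shows "D w = c"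
proof -
  have l: "((\<lambda>s::real. z + s *\<^sub>R w) has_derivative (\<lambda>s. s *\<^sub>R w)) (at 0)"
    by (auto intro!: derivative_eq_intros)
  have "((\<lambda>s. H (z + s *\<^sub>R w)) has_derivative (\<lambda>s. D (s *\<^sub>R w))) (at 0)"
    using has_derivative_compose[OF l, of H D] assms(1) by simp
  moreover have "(\<lambda>s. D (s *\<^sub>R w)) = (\<lambda>s. D w * s)"
    using has_derivative_bounded_linear[OF assms(1)] by (simp add: linear_scale bounded_linear.linear mult.commute)
  ultimately have "((\<lambda>s. H (z + s *\<^sub>R w)) has_real_derivative D w) (at 0)"
    by (simp add: has_field_derivative_def)
  then show ?thesis using assms(2) DERIV_unique by blast
qed

lemma ham_grad:
  assumes "(ham has_derivative (\<lambda>hk. a \<bullet> fst hk + b \<bullet> snd hk)) (at (q,p))"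
  shows "a$1 = 0" "a$2 = 0"
    "a$3 = ln lam * (exp (2*q$3*ln lam) * (p$2)^2 - exp (-2*q$3*ln lam) * (p$1)^2)"
    "b$1 = exp (-2*q$3*ln lam) * p$1" "b$2 = exp (2*q$3*ln lam) * p$2" "b$3 = p$3"
proof -
  have a1: "((\<lambda>s. ham ((q,p) + s *\<^sub>R (axis 1 1, 0))) has_real_derivative 0) (at 0)"
    by (simp add: ham_def axis_def)
  show "a$1 = 0" using dir_deriv[OF assms a1] by (simp add: inner_axis)
  have a2: "((\<lambda>s. ham ((q,p) + s *\<^sub>R (axis 2 1, 0))) has_real_derivative 0) (at 0)"
    by (simp add: ham_def axis_def)
  show "a$2 = 0" using dir_deriv[OF assms a2] by (simp add: inner_axis)
  have a3: "((\<lambda>s. ham ((q,p) + s *\<^sub>R (axis 3 1, 0))) has_real_derivative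
     ln lam * (exp (2*q$3*ln lam) * (p$2)^2 - exp (-2*q$3*ln lam) * (p$1)^2)) (at 0)"
    unfolding ham_def axis_def
    by (auto intro!: derivative_eq_intros simp: algebra_simps) (simp_all add: field_simps)
  show "a$3 = ln lam * (exp (2*q$3*ln lam) * (p$2)^2 - exp (-2*q$3*ln lam) * (p$1)^2)"
    using dir_deriv[OF assms a3] by (simp add: inner_axis)
  have b1: "((\<lambda>s. ham ((q,p) + s *\<^sub>R (0, axis 1 1))) has_real_derivative exp (-2*q$3*ln lam) * p$1) (at 0)"
    unfolding ham_def axis_def
    by (auto intro!: derivative_eq_intros simp: algebra_simps) 
  show "b$1 = exp (-2*q$3*ln lam) * p$1" using dir_deriv[OF assms b1] by (simp add: inner_axis)
  have b2: "((\<lambda>s. ham ((q,p) + s *\<^sub>R (0, axis 2 1))) has_real_derivative exp (2*q$3*ln lam) * p$2) (at 0)"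
    unfolding ham_def axis_def
    by (auto intro!: derivative_eq_intros simp: algebra_simps) 
  show "b$2 = exp (2*q$3*ln lam) * p$2" using dir_deriv[OF assms b2] by (simp add: inner_axis)
  have b3: "((\<lambda>s. ham ((q,p) + s *\<^sub>R (0, axis 3 1))) has_real_derivative p$3) (at 0)"
    unfolding ham_def axis_def
    by (auto intro!: derivative_eq_intros simp: algebra_simps) 
  show "b$3 = p$3" using dir_deriv[OF assms b3] by (simp add: inner_axis)
qed

lemma comp_deriv:
  fixes f :: "real \<Rightarrow> (real^'n) \<times> (real^'m)"
  assumes "(f has_vector_derivative (b, c)) (at t)"
  shows "((\<lambda>s. snd (f s) $ i) has_real_derivative c $ i) (at t)"
    "((\<lambda>s. fst (f s) $ j) has_real_derivative b $ j) (at t)"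
proof -
  have l1: "bounded_linear (\<lambda>z::(real^'n) \<times> (real^'m). snd z $ i)"
    using bounded_linear_compose[OF bounded_linear_vec_nth[of i] bounded_linear_snd] by (simp add: o_def)
  show "((\<lambda>s. snd (f s) $ i) has_real_derivative c $ i) (at t)"
    using bounded_linear.has_vector_derivative[OF l1 assms]
    by (simp add: has_real_derivative_iff_has_vector_derivative)
  have l2: "bounded_linear (\<lambda>z::(real^'n) \<times> (real^'m). fst z $ j)"
    using bounded_linear_compose[OF bounded_linear_vec_nth[of j] bounded_linear_fst] by (simp add: o_def)
  show "((\<lambda>s. fst (f s) $ j) has_real_derivative b $ j) (at t)"
    using bounded_linear.has_vector_derivative[OF l2 assms]
    by (simp add: has_real_derivative_iff_has_vector_derivative)
qed

lemma flow_fixed: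
  assumes hf: "hamiltonian_flow ham \<Phi>" and e: "e = vector [0, 0, \<sigma>]"
  shows "snd (\<Phi> t (q, e)) = e \<and> fst (\<Phi> t (q, e)) = q + t *\<^sub>R e"
proof -
  define x where "x = (q, e)"
  have H: "\<forall>t. \<exists>a b. (ham has_derivative (\<lambda>hk. a \<bullet> fst hk + b \<bullet> snd hk)) (at (\<Phi> t x)) \<and>
                 ((\<lambda>s. \<Phi> s x) has_vector_derivative (b, - a)) (at t)"
    using hf unfolding hamiltonian_flow_def by blast
  obtain A where A: "\<forall>t. \<exists>b. (ham has_derivative (\<lambda>hk. A t \<bullet> fst hk + b \<bullet> snd hk)) (at (\<Phi> t x)) \<and>
                 ((\<lambda>s. \<Phi> s x) has_vector_derivative (b, - A t)) (at t)"
    using choice[OF H] by (elim exE)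
  obtain B where B: "\<forall>t. (ham has_derivative (\<lambda>hk. A t \<bullet> fst hk + B t \<bullet> snd hk)) (at (\<Phi> t x)) \<and>
                 ((\<lambda>s. \<Phi> s x) has_vector_derivative (B t, - A t)) (at t)"
    using choice[OF A] by (elim exE)
  have AB: "\<And>t. (ham has_derivative (\<lambda>hk. A t \<bullet> fst hk + B t \<bullet> snd hk)) (at (\<Phi> t x))"
    "\<And>t. ((\<lambda>s. \<Phi> s x) has_vector_derivative (B t, - A t)) (at t)"
    using B by auto
  have x0: "\<Phi> 0 x = x" using hf unfolding hamiltonian_flow_def by blast
  define Q where "Q s = fst (\<Phi> s x)" for s
  define P where "P s = snd (\<Phi> s x)" for s
  have PQ: "\<Phi> s x = (Q s, P s)" for s by (simp add: P_def Q_def)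
  have gr: "A s $ 1 = 0" "A s $ 2 = 0"
    "A s $ 3 = ln lam * (exp (2*Q s$3*ln lam) * (P s$2)^2 - exp (-2*Q s$3*ln lam) * (P s$1)^2)"
    "B s $ 1 = exp (-2*Q s$3*ln lam) * P s$1" "B s $ 2 = exp (2*Q s$3*ln lam) * P s$2" "B s $ 3 = P s$3"
    for s using ham_grad[OF AB(1)[of s, unfolded PQ]] by auto
  have dP: "((\<lambda>s. P s $ i) has_real_derivative - A t $ i) (at t)" for i t
    using comp_deriv(1)[OF AB(2)[of t]] by (simp add: P_def)
  have dQ: "((\<lambda>s. Q s $ i) has_real_derivative B t $ i) (at t)" for i t
    using comp_deriv(2)[OF AB(2)[of t]] by (simp add: Q_def)
  have P0: "P 0 = e" "Q 0 = q" using x0 by (simp_all add: P_def Q_def x_def)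
  have p1: "P s $ 1 = 0" for s
    using DERIV_isconst_all[of "\<lambda>s. P s $ 1" s 0] dP[of 1] gr P0 e by simp
  have p2: "P s $ 2 = 0" for s
    using DERIV_isconst_all[of "\<lambda>s. P s $ 2" s 0] dP[of 2] gr P0 e by simp
  have p3: "P s $ 3 = \<sigma>" for s
    using DERIV_isconst_all[of "\<lambda>s. P s $ 3" s 0] dP[of 3] gr p1 p2 P0 e by simp
  have q1: "Q s $ 1 = q $ 1" for s
    using DERIV_isconst_all[of "\<lambda>s. Q s $ 1" s 0] dQ[of 1] gr p1 P0 by simp
  have q2: "Q s $ 2 = q $ 2" for s
    using DERIV_isconst_all[of "\<lambda>s. Q s $ 2" s 0] dQ[of 2] gr p2 P0 by simp
  have "((\<lambda>s. Q s $ 3 - s * \<sigma>) has_real_derivative 0) (at t)" for t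
    using dQ[of 3 t] gr p3 by (auto intro!: derivative_eq_intros)
  then have q3: "Q s $ 3 = q $ 3 + s * \<sigma>" for s
    using DERIV_isconst_all[of "\<lambda>s. Q s $ 3 - s * \<sigma>" s 0] P0 by simp
  have "P t = e" using p1 p2 p3 e by (simp add: vec_eq_iff forall_3)
  moreover have "Q t = q + t *\<^sub>R e" using q1 q2 q3 e by (simp add: vec_eq_iff forall_3)
  ultimately show ?thesis by (simp add: P_def Q_def x_def)
qed


lemma lam_gt1: "lam > 1"
proof -
  have s5: "0 < sqrt (5::real)" by simp
  have "2 < 3 + sqrt (5::real)" using s5 by linarith
  then show ?thesis unfolding lam_def by (simp add: field_simps)
qed

lemma lam_nz: "lam \<noteq> 0" using lam_gt1 by simp

lemma ln_lam_pos: "ln lam > 0" using lam_gt1 by simp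

lemma span_axis_mem: "v \<in> span {axis k (1::real)} \<longleftrightarrow> (\<exists>s. v = s *\<^sub>R axis k 1)"
  by (auto simp: span_singleton)

lemma deck_props:
  assumes "\<gamma> \<in> deck_generators P"
  shows "\<exists>L. (\<gamma> has_derivative L) (at x) \<and> (\<forall>k::3. \<exists>c. L (axis k 1) = c *\<^sub>R axis k 1)"
  using assms unfolding deck_generators_def
proof (elim UnE)
  assume "\<gamma> \<in> {\<lambda>q. q + vector [P (vector [of_int a, of_int b]) $ 1, P (vector [of_int a, of_int b]) $ 2, 0] |a b. True}"
  then obtain c where c: "\<gamma> = (\<lambda>q. q + c)" by blast
  have "(\<gamma> has_derivative (\<lambda>h. h)) (at x)" unfolding c by (auto intro!: derivative_eq_intros)
  then show ?thesis by (intro exI[of _ "\<lambda>h. h"]) (auto intro!: exI[of _ 1])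
next
  assume "\<gamma> \<in> {\<lambda>q. vector [q $ 1 / lam, lam * q $ 2, q $ 3 + 1]}"
  then have g: "\<gamma> = (\<lambda>q. vector [q $ 1 / lam, lam * q $ 2, q $ 3 + 1])" by blast
  define L :: "real^3 \<Rightarrow> real^3" where "L h = (h$1 / lam) *\<^sub>R axis 1 1 + (lam * h$2) *\<^sub>R axis 2 1 + (h$3) *\<^sub>R axis 3 (1::real)" for h
  have geq: "\<gamma> = (\<lambda>q. L q + axis 3 1)"
    unfolding g L_def by (rule ext) (simp add: vec_eq_iff forall_3 axis_def)
  have bl: "bounded_linear (\<lambda>h::real^3. h $ i)" for i by (rule bounded_linear_vec_nth)
  have dc: "((\<lambda>h::real^3. h $ i) has_derivative (\<lambda>h. h $ i)) (at x)" for i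
    using bounded_linear.has_derivative[OF bl has_derivative_ident] by simp
  have "(\<gamma> has_derivative L) (at x)"
    unfolding geq L_def using lam_nz by (auto intro!: derivative_eq_intros dc)
  moreover have "\<forall>k::3. \<exists>c. L (axis k 1) = c *\<^sub>R axis k 1"
  proof
    fix k :: 3
    show "\<exists>c. L (axis k 1) = c *\<^sub>R axis k 1"
      using exhaust_3[of k]
      using lam_nz by (auto simp: L_def vec_eq_iff forall_3 axis_def)
  qed
  ultimately show ?thesis by blast
qed


lemma anosov_generic:
  fixes e :: "real^3" and ks ku :: 3
  assumes idx: "(ks = 1 \<and> ku = 2) \<or> (ks = 2 \<and> ku = 1)"
    and e: "e = vector [0, 0, \<sigma>]" and sg: "\<sigma> \<noteq> 0"
    and ds: "\<And>x s t. t \<ge> 0 \<Longrightarrow> metric_norm (x + t *\<^sub>R e) (s *\<^sub>R axis ks 1)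
              \<le> exp (- ln lam * t) * metric_norm x (s *\<^sub>R axis ks 1)"
    and du: "\<And>x s t. t \<ge> 0 \<Longrightarrow> metric_norm (x + (- t) *\<^sub>R e) (s *\<^sub>R axis ku 1)
              \<le> exp (- ln lam * t) * metric_norm x (s *\<^sub>R axis ku 1)"
  shows "anosov_cover (deck_generators P) metric_norm (\<lambda>t q. q + t *\<^sub>R e)"
proof -
  have hd: "((\<lambda>q. q + t *\<^sub>R e) has_derivative (\<lambda>h. h)) (at x)" for t x
    by (auto intro!: derivative_eq_intros)
  have fd: "frechet_derivative (\<lambda>q. q + t *\<^sub>R e) (at x) = (\<lambda>h. h)" for t x
    using frechet_derivative_at[OF hd[of t x]] by simp
  have diff: "\<forall>t x. (\<lambda>q. q + t *\<^sub>R e) differentiable (at x)"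
    using hd unfolding differentiable_def by blast
  define Es where "Es x = span {axis ks (1::real)}" for x :: "real^3"
  define Eu where "Eu x = span {axis ku (1::real)}" for x :: "real^3"
  define Ps where "Ps x w = (w $ ks) *\<^sub>R axis ks (1::real)" for x w :: "real^3"
  define Pu where "Pu x w = (w $ ku) *\<^sub>R axis ku (1::real)" for x w :: "real^3"
  have e3: "e $ 3 = \<sigma>" "e $ 1 = 0" "e $ 2 = 0" using e by simp_all
  have k3: "\<forall>x. ((\<lambda>t. x + t *\<^sub>R e) has_vector_derivative e) (at 0) \<and> e \<noteq> 0"
  proof
    fix x :: "real^3"
    have "((\<lambda>t. x + t *\<^sub>R e) has_vector_derivative e) (at 0)"
      by (auto intro!: derivative_eq_intros)
    moreover have "e \<noteq> 0" using e3 sg by auto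
    ultimately show "((\<lambda>t. x + t *\<^sub>R e) has_vector_derivative e) (at 0) \<and> e \<noteq> 0" by blast
  qed
  have k4: "\<forall>x. subspace (Es x) \<and> subspace (Eu x)"
    by (simp add: Es_def Eu_def subspace_span)
  have k5: "\<forall>x a b c. a \<in> Es x \<longrightarrow> b \<in> Eu x \<longrightarrow> a + b + c *\<^sub>R e = 0 \<longrightarrow>
                   a = 0 \<and> b = 0 \<and> c = 0"
  proof (intro allI impI)
    fix x a b c
    assume a: "a \<in> Es x" and b: "b \<in> Eu x" and abc: "a + b + c *\<^sub>R e = 0"
    obtain s where s: "a = s *\<^sub>R axis ks 1" using a unfolding Es_def span_axis_mem by blast
    obtain r where r: "b = r *\<^sub>R axis ku 1" using b unfolding Eu_def span_axis_mem by blast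
    have "(a + b + c *\<^sub>R e) $ i = 0" for i using abc by simp
    from this[of 1] this[of 2] this[of 3] have "s = 0 \<and> r = 0 \<and> c = 0"
      using idx sg e3 by (auto simp: s r axis_def)
    then show "a = 0 \<and> b = 0 \<and> c = 0" by (simp add: s r)
  qed
  have k6: "\<forall>x w. Ps x w \<in> Es x \<and> Pu x w \<in> Eu x \<and> w - Ps x w - Pu x w \<in> span {e}"
  proof (intro allI conjI)
    fix x w :: "real^3"
    show "Ps x w \<in> Es x" unfolding Ps_def Es_def span_axis_mem by blast
    show "Pu x w \<in> Eu x" unfolding Pu_def Eu_def span_axis_mem by blast
    have "w - Ps x w - Pu x w = (w $ 3 / \<sigma>) *\<^sub>R e"
      using idx sg e3 by (auto simp: Ps_def Pu_def vec_eq_iff forall_3 axis_def)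
    then show "w - Ps x w - Pu x w \<in> span {e}" by (simp add: span_singleton) (rule rangeI)
  qed
  have k7: "continuous_on UNIV (\<lambda>(x, w). Ps x w)"
    unfolding Ps_def case_prod_beta' by (auto intro!: continuous_intros)
  have k8: "continuous_on UNIV (\<lambda>(x, w). Pu x w)"
    unfolding Pu_def case_prod_beta' by (auto intro!: continuous_intros)
  have k9: "\<forall>t x v. v \<in> Es x \<longrightarrow> frechet_derivative (\<lambda>q. q + t *\<^sub>R e) (at x) v \<in> Es (x + t *\<^sub>R e)"
    by (simp add: fd Es_def)
  have k10: "\<forall>t x v. v \<in> Eu x \<longrightarrow> frechet_derivative (\<lambda>q. q + t *\<^sub>R e) (at x) v \<in> Eu (x + t *\<^sub>R e)"
    by (simp add: fd Eu_def)
  have k11: "\<forall>t x v. t \<ge> 0 \<longrightarrow> v \<in> Es x \<longrightarrow>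
           metric_norm (x + t *\<^sub>R e) (frechet_derivative (\<lambda>q. q + t *\<^sub>R e) (at x) v)
             \<le> 1 * exp (- ln lam * t) * metric_norm x v"
    using ds by (auto simp: fd Es_def span_axis_mem)
  have k12: "\<forall>t x v. t \<ge> 0 \<longrightarrow> v \<in> Eu x \<longrightarrow>
           metric_norm (x + (- t) *\<^sub>R e) (frechet_derivative (\<lambda>q. q + (- t) *\<^sub>R e) (at x) v)
             \<le> 1 * exp (- ln lam * t) * metric_norm x v"
    using du fd[of "- t" for t] by (auto simp: Eu_def span_axis_mem)
  have deck1: "\<gamma> differentiable (at x) \<and> (\<forall>k. v \<in> span {axis k 1} \<longrightarrow>
       frechet_derivative \<gamma> (at x) v \<in> span {axis k (1::real)})"
    if g: "\<gamma> \<in> deck_generators P" for \<gamma> x and v :: "real^3"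
  proof -
    obtain L where L: "(\<gamma> has_derivative L) (at x)" "\<forall>k::3. \<exists>c. L (axis k 1) = c *\<^sub>R axis k 1"
      using deck_props[OF g] by blast
    have lin: "linear L" using has_derivative_bounded_linear[OF L(1)] bounded_linear.linear by blast
    have fL: "frechet_derivative \<gamma> (at x) = L" using frechet_derivative_at[OF L(1)] by simp
    have "\<gamma> differentiable (at x)" using L(1) unfolding differentiable_def by blast
    moreover have "\<forall>k. v \<in> span {axis k 1} \<longrightarrow> frechet_derivative \<gamma> (at x) v \<in> span {axis k (1::real)}"
    proof (intro allI impI)
      fix k :: 3
      assume "v \<in> span {axis k 1}"
      then obtain s where s: "v = s *\<^sub>R axis k 1" unfolding span_axis_mem by blast
      obtain c where c: "L (axis k 1) = c *\<^sub>R axis k 1" using L(2) by blast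
      have "L v = (s * c) *\<^sub>R axis k 1" using linear_scale[OF lin] s c by simp
      then show "frechet_derivative \<gamma> (at x) v \<in> span {axis k (1::real)}"
        unfolding fL span_axis_mem by blast
    qed
    ultimately show ?thesis by blast
  qed
  have k13: "\<forall>\<gamma>\<in>deck_generators P. \<forall>x v. \<gamma> differentiable (at x) \<and>
           (v \<in> Es x \<longrightarrow> frechet_derivative \<gamma> (at x) v \<in> Es (\<gamma> x)) \<and>
           (v \<in> Eu x \<longrightarrow> frechet_derivative \<gamma> (at x) v \<in> Eu (\<gamma> x))"
    using deck1 unfolding Es_def Eu_def by blast
  have k1: "(1::real) > 0" by simp
  show ?thesis
    unfolding anosov_cover_def
    apply (rule conjI[OF diff])
    apply (rule exI[of _ "\<lambda>x. e"], rule exI[of _ Es], rule exI[of _ Eu], rule exI[of _ Ps],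
           rule exI[of _ Pu], rule exI[of _ 1], rule exI[of _ "ln lam"])
    using k1 ln_lam_pos k3 k4 k5 k6 k7 k8 k9 k10 k11 k12 k13 by simp
qed


lemma sqrt_exp_mul: "c \<ge> 0 \<Longrightarrow> sqrt (exp (2 * d) * c) = exp d * sqrt c"
proof -
  assume "c \<ge> 0"
  have "exp (2 * d) = (exp d)^2" by (simp add: exp_double[symmetric] power2_eq_square mult_exp_exp)
  then show ?thesis by (simp add: real_sqrt_mult)
qed

lemma mn2: "metric_norm y (s *\<^sub>R axis 2 1) = sqrt (exp (-2 * y$3 * ln lam) * s^2)"
  by (simp add: metric_norm_def axis_def)

lemma mn1: "metric_norm y (s *\<^sub>R axis 1 1) = sqrt (exp (2 * y$3 * ln lam) * s^2)"
  by (simp add: metric_norm_def axis_def)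

lemma decay_gen:
  assumes "a' = a + 2 * (- (ln lam * t))"
  shows "sqrt (exp a' * s^2) \<le> exp (- ln lam * t) * sqrt (exp a * s^2)"
proof -
  have "exp a' = exp (2 * (- (ln lam * t))) * exp a"
    unfolding assms mult_exp_exp by (simp add: algebra_simps)
  then have E: "exp a' * s^2 = exp (2 * (- (ln lam * t))) * (exp a * s^2)" by simp
  have "sqrt (exp a' * s^2) = exp (- (ln lam * t)) * sqrt (exp a * s^2)"
    unfolding E using sqrt_exp_mul[of "exp a * s^2" "- (ln lam * t)"] by simp
  then show ?thesis by simp
qed

lemma anosov_plus: "anosov_cover (deck_generators P) metric_norm (\<lambda>t q. q + t *\<^sub>R (vector [0, 0, 1] :: real^3))"
proof (rule anosov_generic[where ks=2 and ku=1 and \<sigma>=1])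
  fix x :: "real^3" and s t :: real
  show "metric_norm (x + t *\<^sub>R vector [0, 0, 1]) (s *\<^sub>R axis 2 1)
              \<le> exp (- ln lam * t) * metric_norm x (s *\<^sub>R axis 2 1)"
    unfolding mn2 by (rule decay_gen) (simp add: algebra_simps)
  show "metric_norm (x + (- t) *\<^sub>R vector [0, 0, 1]) (s *\<^sub>R axis 1 1)
              \<le> exp (- ln lam * t) * metric_norm x (s *\<^sub>R axis 1 1)"
    unfolding mn1 by (rule decay_gen) (simp add: algebra_simps)
qed simp_all

lemma anosov_minus: "anosov_cover (deck_generators P) metric_norm (\<lambda>t q. q + t *\<^sub>R (vector [0, 0, -1] :: real^3))"
proof (rule anosov_generic[where ks=1 and ku=2 and \<sigma>="-1"])
  fix x :: "real^3" and s t :: real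
  show "metric_norm (x + t *\<^sub>R vector [0, 0, -1]) (s *\<^sub>R axis 1 1)
              \<le> exp (- ln lam * t) * metric_norm x (s *\<^sub>R axis 1 1)"
    unfolding mn1 by (rule decay_gen) (simp add: algebra_simps)
  show "metric_norm (x + (- t) *\<^sub>R vector [0, 0, -1]) (s *\<^sub>R axis 2 1)
              \<le> exp (- ln lam * t) * metric_norm x (s *\<^sub>R axis 2 1)"
    unfolding mn2 by (rule decay_gen) (simp add: algebra_simps)
qed simp_all

theorem corollary2:
  fixes P :: "real^2 \<Rightarrow> real^2"
    and \<Phi> :: "real \<Rightarrow> (real^3) \<times> (real^3) \<Rightarrow> (real^3) \<times> (real^3)"
  assumes "eigen_coords P"
    and "hamiltonian_flow ham \<Phi>"
  shows "\<forall>e \<in> {vector [0, 0, 1], vector [0, 0, -1]}.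
           (\<forall>t q. snd (\<Phi> t (q, e)) = e) \<and>
           anosov_cover (deck_generators P) metric_norm (\<lambda>t q. fst (\<Phi> t (q, e)))"
proof
  fix e :: "real^3"
  assume "e \<in> {vector [0, 0, 1], vector [0, 0, -1]}"
  then obtain \<sigma> where e: "e = vector [0, 0, \<sigma>]" and an: "anosov_cover (deck_generators P) metric_norm (\<lambda>t q. q + t *\<^sub>R e)"
    using anosov_plus anosov_minus by blast
  have fl: "snd (\<Phi> t (q, e)) = e \<and> fst (\<Phi> t (q, e)) = q + t *\<^sub>R e" for t q
    using flow_fixed[OF assms(2) e] by blast
  have "(\<lambda>t q. fst (\<Phi> t (q, e))) = (\<lambda>t q. q + t *\<^sub>R e)" using fl by blast
  then show "(\<forall>t q. snd (\<Phi> t (q, e)) = e) \<and>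
           anosov_cover (deck_generators P) metric_norm (\<lambda>t q. fst (\<Phi> t (q, e)))"
    using fl an by simp
qed

end
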